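(* Let $(\mathcal{X},\mathcal{B},\lambda)$ be a measure space with $\lambda$ positive and $\sigma$-finite, and $P$ a probability measure on it with density $f\in\mathcal{L}^2(\mathcal{X},\lambda)$ with respect to $\lambda$. Let $X_1,\dots,X_N$ be i.i.d. with law $P$. Let $f_1,\dots,f_m\in\mathcal{L}^2$ with $D_k=\int f_k^2d\lambda>0$, and assume condition $\mathcal{H}(p)$ (see context) holds for some $p\in[1,+\infty]$. Then for every $\varepsilon>0$, $$P^{\otimes N}\left\{\forall k\in\{1,\dots,m\},\ \forall g\in\mathcal{L}^2,\ d^2(\Pi_{\mathcal{CR}_{k,\varepsilon}}g,f)\le d^2(g,f)\right\}\ge1-\varepsilon.$$
   Context: $d^2(g,h)=\int(g-h)^2d\lambda$ on $\mathcal{L}^2=\mathcal{L}^2(\mathcal{X},\lambda)$. $\hat\alpha_k=\frac{\frac1N\sum_{i=1}^Nf_k(X_i)}{D_k}$. $\mathcal{M}_k=\{\alpha f_k:\alpha\in\mathbb{R}\}$, $\Pi_{\mathcal{M}_k}$ the orthogonal projection onto it. Condition $\mathcal{H}(p)$: for $1<p<\infty$ with $\frac1p+\frac1q=1$, there are known constants $c,c_1,\dots,c_m>0$ with $(\int|f_k|^{2p}d\lambda)^{1/p}\le c_k\int f_k^2d\lambda$ for all $k$ and $(\int|f|^qd\lambda)^{1/q}\le c$; for $p=1$: $f\le c$ everywhere and $c_k=1$; for $p=\infty$: $|f_k|\le\sqrt{c_kD_k}$ everywhere and $c=1$. $C_k=c_kc$. $\beta(\varepsilon,k)=\frac{4[1+\log\frac{2m}{\varepsilon}]}{N}\left[\frac{\frac1N\sum_if_k(X_i)^2}{D_k}+C_k\right]$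 and $\mathcal{CR}_{k,\varepsilon}=\{g\in\mathcal{L}^2:d^2(\hat\alpha_kf_k,\Pi_{\mathcal{M}_k}g)\le\beta(\varepsilon,k)\}$, a closed convex set; $\Pi_{\mathcal{CR}_{k,\varepsilon}}$ denotes the metric (nearest-point) projection onto it in $\mathcal{L}^2$. *)

theory Defs
  imports "HOL-Probability.Probability"
begin

definition L2 :: "'a measure \<Rightarrow> ('a \<Rightarrow> real) set" where
  "L2 M = {g. g \<in> borel_measurable M \<and> integrable M (\<lambda>x. (g x)\<^sup>2)}"

definition dist2 :: "'a measure \<Rightarrow> ('a \<Rightarrow> real) \<Rightarrow> ('a \<Rightarrow> real) \<Rightarrow> real" where
  "dist2 M g h = (LINT x|M. (g x - h x)\<^sup>2)"

definition proj_line :: "'a measure \<Rightarrow> ('a \<Rightarrow> real) \<Rightarrow> ('a \<Rightarrow> real) \<Rightarrow> ('a \<Rightarrow> real)" where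
  "proj_line M h g = (\<lambda>x. ((LINT y|M. g y * h y) / (LINT y|M. (h y)\<^sup>2)) * h x)"

definition is_metric_proj :: "'a measure \<Rightarrow> ('a \<Rightarrow> real) set \<Rightarrow> ('a \<Rightarrow> real) \<Rightarrow> ('a \<Rightarrow> real) \<Rightarrow> bool" where
  "is_metric_proj M C g p \<longleftrightarrow> p \<in> C \<and> (\<forall>h\<in>C. dist2 M p g \<le> dist2 M h g)"

definition cond_H :: "'a measure \<Rightarrow> ('a \<Rightarrow> real) \<Rightarrow> (nat \<Rightarrow> 'a \<Rightarrow> real) \<Rightarrow> nat
    \<Rightarrow> real \<Rightarrow> (nat \<Rightarrow> real) \<Rightarrow> ereal \<Rightarrow> bool" where
  "cond_H M f fs m c cs p \<longleftrightarrow> 1 \<le> p \<and> c > 0 \<and> (\<forall>k<m. cs k > 0) \<and>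
     (if p = 1 then (\<forall>x\<in>space M. f x \<le> c) \<and> (\<forall>k<m. cs k = 1)
      else if p = \<infinity> then
        (\<forall>k<m. \<forall>x\<in>space M. \<bar>fs k x\<bar> \<le> sqrt (cs k * (LINT y|M. (fs k y)\<^sup>2))) \<and> c = 1
      else (let p' = real_of_ereal p; q = p' / (p' - 1) in
        (\<forall>k<m. integrable M (\<lambda>x. \<bar>fs k x\<bar> powr (2 * p')) \<and>
           (LINT x|M. \<bar>fs k x\<bar> powr (2 * p')) powr (1 / p') \<le> cs k * (LINT x|M. (fs k x)\<^sup>2)) \<and>
        integrable M (\<lambda>x. \<bar>f x\<bar> powr q) \<and>
        (LINT x|M. \<bar>f x\<bar> powr q) powr (1 / q) \<le> c))"

definition alpha_hat :: "'a measure \<Rightarrow> (nat \<Rightarrow> 'a \<Rightarrow> real) \<Rightarrow> nat \<Rightarrow> (nat \<Rightarrow> 'a) \<Rightarrow> nat \<Rightarrow> real" where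
  "alpha_hat M fs N \<omega> k = ((\<Sum>i<N. fs k (\<omega> i)) / real N) / (LINT y|M. (fs k y)\<^sup>2)"

definition beta :: "'a measure \<Rightarrow> (nat \<Rightarrow> 'a \<Rightarrow> real) \<Rightarrow> nat \<Rightarrow> real \<Rightarrow> (nat \<Rightarrow> real)
    \<Rightarrow> nat \<Rightarrow> (nat \<Rightarrow> 'a) \<Rightarrow> real \<Rightarrow> nat \<Rightarrow> real" where
  "beta M fs m c cs N \<omega> \<epsilon> k =
     4 * (1 + ln (2 * real m / \<epsilon>)) / real N *
     (((\<Sum>i<N. (fs k (\<omega> i))\<^sup>2) / real N) / (LINT y|M. (fs k y)\<^sup>2) + cs k * c)"

definition CR :: "'a measure \<Rightarrow> (nat \<Rightarrow> 'a \<Rightarrow> real) \<Rightarrow> nat \<Rightarrow> real \<Rightarrow> (nat \<Rightarrow> real)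
    \<Rightarrow> nat \<Rightarrow> (nat \<Rightarrow> 'a) \<Rightarrow> real \<Rightarrow> nat \<Rightarrow> ('a \<Rightarrow> real) set" where
  "CR M fs m c cs N \<omega> \<epsilon> k = {g \<in> L2 M.
     dist2 M (\<lambda>x. alpha_hat M fs N \<omega> k * fs k x) (proj_line M (fs k) g)
       \<le> beta M fs m c cs N \<omega> \<epsilon> k}"

end

theory Submission
  imports Defs
begin



lemma phi_deriv:
  "((\<lambda>x::real. (1 + x + x\<^sup>2/2) * exp (x\<^sup>2/2 - x)) has_real_derivative
     (x + x\<^sup>2/2 + x^3/2) * exp (x\<^sup>2/2 - x)) (at x)"
proof -
  have "((\<lambda>x::real. (1 + x + x\<^sup>2/2) * exp (x\<^sup>2/2 - x)) has_real_derivative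
     (1 + x) * exp (x\<^sup>2/2 - x) + (1 + x + x\<^sup>2/2) * (exp (x\<^sup>2/2 - x) * (x - 1))) (at x)"
    by (auto intro!: derivative_eq_intros simp: power2_eq_square)
  moreover have "(1 + x) * exp (x\<^sup>2/2 - x) + (1 + x + x\<^sup>2/2) * (exp (x\<^sup>2/2 - x) * (x - 1))
     = (x + x\<^sup>2/2 + x^3/2) * exp (x\<^sup>2/2 - x)"
    by (simp add: algebra_simps power2_eq_square power3_eq_cube)
  ultimately show ?thesis by simp
qed

lemma exp_quad_le: "exp (x - x\<^sup>2/2) \<le> 1 + x + x\<^sup>2/(2::real)"
proof -
  define \<phi> where "\<phi> = (\<lambda>x::real. (1 + x + x\<^sup>2/2) * exp (x\<^sup>2/2 - x))"
  have sgn: "0 \<le> x * (x + x\<^sup>2/2 + x^3/2)" for x :: real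
  proof -
    have e: "1 + x/2 + x\<^sup>2/2 = (x + 1/2)\<^sup>2/2 + 7/8" by (simp add: power2_eq_square field_simps)
    have "0 \<le> (x + 1/2)\<^sup>2/2 + 7/8" by simp
    hence "0 \<le> 1 + x/2 + x\<^sup>2/2" by (simp only: e)
    hence "0 \<le> x * x * (1 + x/2 + x\<^sup>2/2)" by simp
    thus ?thesis by (simp add: algebra_simps power2_eq_square power3_eq_cube)
  qed
  have d: "(\<phi> has_real_derivative (y + y\<^sup>2/2 + y^3/2) * exp (y\<^sup>2/2 - y)) (at y)" for y
    unfolding \<phi>_def by (rule phi_deriv)
  have "\<phi> 0 \<le> \<phi> x"
  proof (cases "0 \<le> x")
    case True
    show ?thesis
    proof (rule deriv_nonneg_imp_mono[OF d])
      fix y assume "y \<in> {0..x}"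
      hence "0 \<le> y" by simp
      hence "0 \<le> y + y\<^sup>2/2 + y^3/2" by simp
      thus "0 \<le> (y + y\<^sup>2/2 + y^3/2) * exp (y\<^sup>2/2 - y)" by simp
    qed (use True in auto)
  next
    case False
    show ?thesis
    proof (rule deriv_nonpos_imp_antimono[OF d])
      fix y assume "y \<in> {x..0}"
      hence "y \<le> 0" by simp
      have o: "(0 \<le> y \<and> 0 \<le> y + y\<^sup>2/2 + y^3/2) \<or> (y \<le> 0 \<and> y + y\<^sup>2/2 + y^3/2 \<le> 0)"
        using sgn[of y] by (simp only: zero_le_mult_iff)
      have "y + y\<^sup>2/2 + y^3/2 \<le> 0"
      proof (cases "y = 0")
        case False with \<open>y \<le> 0\<close> o show ?thesis by auto
      qed simp
      thus "(y + y\<^sup>2/2 + y^3/2) * exp (y\<^sup>2/2 - y) \<le> 0"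
        by (simp add: mult_nonpos_nonneg)
    qed (use False in auto)
  qed
  hence "1 \<le> (1 + x + x\<^sup>2/2) * exp (x\<^sup>2/2 - x)" by (simp add: \<phi>_def)
  hence "exp (x - x\<^sup>2/2) * 1 \<le> exp (x - x\<^sup>2/2) * ((1 + x + x\<^sup>2/2) * exp (x\<^sup>2/2 - x))"
    by (intro mult_left_mono) auto
  also have "\<dots> = 1 + x + x\<^sup>2/2" by (simp add: mult_exp_exp[symmetric] algebra_simps flip: exp_add)
  finally show ?thesis by simp
qed



definition ip :: "'a measure \<Rightarrow> ('a \<Rightarrow> real) \<Rightarrow> ('a \<Rightarrow> real) \<Rightarrow> real" where
  "ip M g h = (LINT x|M. g x * h x)"

lemma L2_meas[measurable_dest]: "g \<in> L2 M \<Longrightarrow> g \<in> borel_measurable M"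
  by (simp add: L2_def)

lemma L2_int: "g \<in> L2 M \<Longrightarrow> integrable M (\<lambda>x. (g x)\<^sup>2)"
  by (simp add: L2_def)

lemma L2_mult_int:
  assumes "g \<in> L2 M" "h \<in> L2 M"
  shows "integrable M (\<lambda>x. g x * h x)"
proof (rule Bochner_Integration.integrable_bound[where f="\<lambda>x. (g x)\<^sup>2 + (h x)\<^sup>2"])
  show "integrable M (\<lambda>x. (g x)\<^sup>2 + (h x)\<^sup>2)" using assms by (auto intro: L2_int)
  show "(\<lambda>x. g x * h x) \<in> borel_measurable M" using assms by measurable
  show "AE x in M. norm (g x * h x) \<le> norm ((g x)\<^sup>2 + (h x)\<^sup>2)"
  proof (intro AE_I2)
    fix x
    have "2 * \<bar>g x\<bar> * \<bar>h x\<bar> \<le> (g x)\<^sup>2 + (h x)\<^sup>2"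
      using sum_squares_bound[of "\<bar>g x\<bar>" "\<bar>h x\<bar>"] by (simp add: power2_eq_square)
    moreover have "0 \<le> \<bar>g x\<bar> * \<bar>h x\<bar>" by simp
    ultimately have "\<bar>g x\<bar> * \<bar>h x\<bar> \<le> (g x)\<^sup>2 + (h x)\<^sup>2" by linarith
    thus "norm (g x * h x) \<le> norm ((g x)\<^sup>2 + (h x)\<^sup>2)"
      by (simp add: abs_mult)
  qed
qed

lemma L2_lin:
  assumes "g \<in> L2 M" "h \<in> L2 M"
  shows "(\<lambda>x. a * g x + b * h x) \<in> L2 M"
proof -
  have "integrable M (\<lambda>x. a\<^sup>2 * (g x)\<^sup>2 + 2 * a * b * (g x * h x) + b\<^sup>2 * (h x)\<^sup>2)"
  proof -
    have i1: "integrable M (\<lambda>x. (g x)\<^sup>2)" "integrable M (\<lambda>x. (h x)\<^sup>2)" "integrable M (\<lambda>x. g x * h x)"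
      using assms by (auto intro: L2_int L2_mult_int)
    show ?thesis
      by (rule Bochner_Integration.integrable_add[OF Bochner_Integration.integrable_add[OF integrable_mult_right[OF i1(1)] integrable_mult_right[OF i1(3)]] integrable_mult_right[OF i1(2)]])
  qed
  moreover have "(\<lambda>x. a\<^sup>2 * (g x)\<^sup>2 + 2 * a * b * (g x * h x) + b\<^sup>2 * (h x)\<^sup>2) = (\<lambda>x. (a * g x + b * h x)\<^sup>2)"
    by (auto simp: power2_eq_square algebra_simps)
  ultimately show ?thesis using assms by (auto simp: L2_def)
qed

lemma L2_diff: "g \<in> L2 M \<Longrightarrow> h \<in> L2 M \<Longrightarrow> (\<lambda>x. g x - h x) \<in> L2 M"
  using L2_lin[of g M h 1 "-1"] by simp

lemma L2_scale: "g \<in> L2 M \<Longrightarrow> (\<lambda>x. a * g x) \<in> L2 M"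
  using L2_lin[of g M g a 0] by simp

lemma ip_lin:
  assumes "g \<in> L2 M" "h \<in> L2 M" "k \<in> L2 M"
  shows "ip M (\<lambda>x. a * g x + b * h x) k = a * ip M g k + b * ip M h k"
proof -
  have "ip M (\<lambda>x. a * g x + b * h x) k = (LINT x|M. a * (g x * k x) + b * (h x * k x))"
    unfolding ip_def by (simp add: algebra_simps)
  also have "\<dots> = a * ip M g k + b * ip M h k"
  proof -
    have i1: "integrable M (\<lambda>x. g x * k x)" "integrable M (\<lambda>x. h x * k x)"
      using assms by (auto intro: L2_mult_int)
    have "(LINT x|M. a * (g x * k x) + b * (h x * k x)) = (LINT x|M. a * (g x * k x)) + (LINT x|M. b * (h x * k x))"
      by (rule Bochner_Integration.integral_add[OF integrable_mult_right[OF i1(1)] integrable_mult_right[OF i1(2)]])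
    thus ?thesis unfolding ip_def by simp
  qed
  finally show ?thesis .
qed

lemma ip_sym: "ip M g h = ip M h g"
  unfolding ip_def by (simp add: mult.commute)

lemma ip_self: "ip M g g = (LINT x|M. (g x)\<^sup>2)"
  unfolding ip_def by (simp add: power2_eq_square)

lemma sq_expand:
  assumes "u \<in> L2 M" "v \<in> L2 M"
  shows "(LINT x|M. (u x + t * v x)\<^sup>2) = ip M u u + 2 * t * ip M u v + t\<^sup>2 * ip M v v"
proof -
  have "(LINT x|M. (u x + t * v x)\<^sup>2) = (LINT x|M. (u x * u x + (2 * t) * (u x * v x)) + t\<^sup>2 * (v x * v x))"
    by (simp add: power2_eq_square algebra_simps)
  also have "\<dots> = ip M u u + 2 * t * ip M u v + t\<^sup>2 * ip M v v"
  proof -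
    have i1: "integrable M (\<lambda>x. u x * u x)" "integrable M (\<lambda>x. u x * v x)" "integrable M (\<lambda>x. v x * v x)"
      using assms by (auto intro: L2_mult_int)
    have "(LINT x|M. (u x * u x + (2 * t) * (u x * v x)) + t\<^sup>2 * (v x * v x)) =
       (LINT x|M. (u x * u x + (2 * t) * (u x * v x))) + (LINT x|M. t\<^sup>2 * (v x * v x))"
      by (rule Bochner_Integration.integral_add[OF Bochner_Integration.integrable_add[OF i1(1) integrable_mult_right[OF i1(2)]] integrable_mult_right[OF i1(3)]])
    also have "(LINT x|M. (u x * u x + (2 * t) * (u x * v x))) = (LINT x|M. u x * u x) + (LINT x|M. (2 * t) * (u x * v x))"
      by (rule Bochner_Integration.integral_add[OF i1(1) integrable_mult_right[OF i1(2)]])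
    finally show ?thesis unfolding ip_def by simp
  qed
  finally show ?thesis .
qed

lemma dist2_ip:
  assumes "g \<in> L2 M" "h \<in> L2 M"
  shows "dist2 M g h = ip M (\<lambda>x. g x - h x) (\<lambda>x. g x - h x)"
  unfolding dist2_def ip_self ..

lemma dist2_nonneg: "0 \<le> dist2 M g h"
  unfolding dist2_def by simp

lemma cauchy_schwarz:
  assumes "u \<in> L2 M" "v \<in> L2 M" "ip M v v > 0"
  shows "(ip M u v)\<^sup>2 \<le> ip M u u * ip M v v"
proof -
  define t where "t = - ip M u v / ip M v v"
  have "0 \<le> (LINT x|M. (u x + t * v x)\<^sup>2)" by simp
  also have "\<dots> = ip M u u + 2 * t * ip M u v + t\<^sup>2 * ip M v v"
    by (rule sq_expand[OF assms(1,2)])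
  also have "\<dots> = ip M u u - (ip M u v)\<^sup>2 / ip M v v"
    using assms(3) unfolding t_def by (simp add: field_simps power2_eq_square)
  finally show ?thesis using assms(3) by (simp add: field_simps)
qed



lemma real_clamp:
  fixes a b D x y :: real
  assumes D: "D > 0" and b: "b \<ge> 0" and hx: "b < (a - x)\<^sup>2 * D" and hy: "(a - y)\<^sup>2 * D \<le> b"
  defines "r \<equiv> sqrt (b / D)"
  defines "c \<equiv> (if x > a then a + r else a - r)"
  shows "(c - x)\<^sup>2 \<le> (y - x)\<^sup>2" and "(a - c)\<^sup>2 * D = b"
proof -
  have r0: "r \<ge> 0" using D b by (simp add: r_def)
  have rr: "r\<^sup>2 = b / D" using D b by (simp add: r_def)
  have "b / D < (a - x)\<^sup>2" using hx D by (simp add: field_simps)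
  hence "r < \<bar>a - x\<bar>" unfolding r_def by (metis real_sqrt_abs real_sqrt_less_mono)
  moreover have "(a - y)\<^sup>2 \<le> b / D" using hy D by (simp add: field_simps)
  hence "\<bar>a - y\<bar> \<le> r" unfolding r_def by (metis real_sqrt_abs real_sqrt_le_mono)
  ultimately have "\<bar>c - x\<bar> \<le> \<bar>y - x\<bar>" unfolding c_def using r0 by auto
  thus "(c - x)\<^sup>2 \<le> (y - x)\<^sup>2" by (metis abs_le_square_iff)
  have "(a - c)\<^sup>2 = r\<^sup>2" unfolding c_def by auto
  thus "(a - c)\<^sup>2 * D = b" using rr D by simp
qed

lemma event_char:
  fixes a b :: real
  assumes f: "f \<in> L2 M" and fk: "fk \<in> L2 M" and D: "ip M fk fk > 0"
  defines "C \<equiv> {g \<in> L2 M. (a - ip M g fk / ip M fk fk)\<^sup>2 * ip M fk fk \<le> b}"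
  shows "(\<forall>g\<in>L2 M. \<forall>q. is_metric_proj M C g q \<longrightarrow> dist2 M q f \<le> dist2 M g f) \<longleftrightarrow>
         (b < 0 \<or> (a - ip M f fk / ip M fk fk)\<^sup>2 * ip M fk fk \<le> b)"
proof
  define D where "D = ip M fk fk"
  have D0: "D > 0" using D by (simp add: D_def)
  define \<gamma> where "\<gamma> g = ip M g fk / D" for g
  have Cdef: "C = {g \<in> L2 M. (a - \<gamma> g)\<^sup>2 * D \<le> b}" unfolding C_def \<gamma>_def D_def ..
  have \<gamma>lin: "\<gamma> (\<lambda>x. s * g x + t * h x) = s * \<gamma> g + t * \<gamma> h" if "g \<in> L2 M" "h \<in> L2 M" for s t g h
    unfolding \<gamma>_def using ip_lin[OF that fk] by (simp add: add_divide_distrib)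
  {
    assume H: "\<forall>g\<in>L2 M. \<forall>q. is_metric_proj M C g q \<longrightarrow> dist2 M q f \<le> dist2 M g f"
    show "b < 0 \<or> (a - ip M f fk / ip M fk fk)\<^sup>2 * ip M fk fk \<le> b"
    proof (rule ccontr)
      assume "\<not> ?thesis"
      hence b0: "b \<ge> 0" and hx: "b < (a - \<gamma> f)\<^sup>2 * D" unfolding \<gamma>_def D_def by auto
      define r where "r = sqrt (b / D)"
      define c where "c = (if \<gamma> f > a then a + r else a - r)"
      define q where "q = (\<lambda>x. 1 * f x + (c - \<gamma> f) * fk x)"
      have qL2: "q \<in> L2 M" unfolding q_def using f fk by (rule L2_lin)
      have \<gamma>fk: "\<gamma> fk = 1" using D0 by (simp add: \<gamma>_def D_def[symmetric])
      have \<gamma>q: "\<gamma> q = c" unfolding q_def using \<gamma>lin[OF f fk, of 1 "c - \<gamma> f"] \<gamma>fk by simp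
      have "(a - c)\<^sup>2 = r\<^sup>2" unfolding c_def by auto
      moreover have "r\<^sup>2 = b / D" using D0 b0 by (simp add: r_def)
      ultimately have "(a - c)\<^sup>2 * D = b" using D0 by simp
      hence qC: "q \<in> C" unfolding Cdef using qL2 \<gamma>q by simp
      have dqf: "dist2 M q f = (c - \<gamma> f)\<^sup>2 * D"
      proof -
        have "dist2 M q f = (LINT x|M. (c - \<gamma> f)\<^sup>2 * (fk x)\<^sup>2)"
          unfolding dist2_def q_def by (simp add: power_mult_distrib)
        also have "\<dots> = (c - \<gamma> f)\<^sup>2 * D" unfolding D_def ip_self by simp
        finally show ?thesis .
      qed
      have "is_metric_proj M C f q"
        unfolding is_metric_proj_def
      proof (intro conjI ballI qC)
        fix h assume hC: "h \<in> C"
        hence hL2: "h \<in> L2 M" and hy: "(a - \<gamma> h)\<^sup>2 * D \<le> b" unfolding Cdef by auto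
        define w where "w = (\<lambda>x. 1 * h x + (-1) * f x)"
        have wL2: "w \<in> L2 M" unfolding w_def using hL2 f by (rule L2_lin)
        have e: "ip M w fk = ip M h fk - ip M f fk"
          unfolding w_def using ip_lin[OF hL2 f fk, of 1 "-1"] by simp
        have "ip M w fk = D * (\<gamma> h - \<gamma> f)"
          using D0 unfolding e \<gamma>_def by (simp add: field_simps)
        moreover have "(ip M w fk)\<^sup>2 \<le> ip M w w * D"
          using cauchy_schwarz[OF wL2 fk D] by (simp add: D_def)
        ultimately have "D\<^sup>2 * (\<gamma> h - \<gamma> f)\<^sup>2 \<le> ip M w w * D" by (simp add: power_mult_distrib)
        hence "D * (\<gamma> h - \<gamma> f)\<^sup>2 \<le> ip M w w" using D0 by (simp add: power2_eq_square)
        moreover have "ip M w w = dist2 M h f" unfolding w_def ip_self dist2_def by simp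
        moreover have "(c - \<gamma> f)\<^sup>2 \<le> (\<gamma> h - \<gamma> f)\<^sup>2"
          using real_clamp(1)[OF D0 b0 hx hy] unfolding r_def c_def by simp
        ultimately show "dist2 M q f \<le> dist2 M h f" unfolding dqf using D0
          by (smt (verit) mult_right_mono mult.commute)
      qed
      with H f have "dist2 M q f \<le> dist2 M f f" by blast
      hence "(c - \<gamma> f)\<^sup>2 * D \<le> 0" unfolding dqf by (simp add: dist2_def)
      hence "c = \<gamma> f" using D0 by (simp add: mult_le_0_iff)
      with \<open>(a - c)\<^sup>2 * D = b\<close> hx show False by simp
    qed
  }
  {
    assume R: "b < 0 \<or> (a - ip M f fk / ip M fk fk)\<^sup>2 * ip M fk fk \<le> b"
    show "\<forall>g\<in>L2 M. \<forall>q. is_metric_proj M C g q \<longrightarrow> dist2 M q f \<le> dist2 M g f"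
    proof (intro ballI allI impI)
      fix g q assume g: "g \<in> L2 M" and P: "is_metric_proj M C g q"
      hence qC: "q \<in> C" and near: "\<And>h. h \<in> C \<Longrightarrow> dist2 M q g \<le> dist2 M h g"
        unfolding is_metric_proj_def by auto
      hence q: "q \<in> L2 M" and qb: "(a - \<gamma> q)\<^sup>2 * D \<le> b" unfolding Cdef by auto
      have "0 \<le> (a - \<gamma> q)\<^sup>2 * D" using D0 by simp
      hence b0: "0 \<le> b" using qb by linarith
      with R have fb: "(a - \<gamma> f)\<^sup>2 * D \<le> b" unfolding \<gamma>_def D_def by auto
      define u where "u = (\<lambda>x. 1 * q x + (-1) * g x)"
      define v where "v = (\<lambda>x. 1 * f x + (-1) * q x)"
      have u: "u \<in> L2 M" unfolding u_def using q g by (rule L2_lin)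
      have v: "v \<in> L2 M" unfolding v_def using f q by (rule L2_lin)
      have key: "0 \<le> 2 * ip M u v + t * ip M v v" if t: "0 < t" "t \<le> 1" for t
      proof -
        define h where "h = (\<lambda>x. (1 - t) * q x + t * f x)"
        have hL2: "h \<in> L2 M" unfolding h_def using q f by (rule L2_lin)
        have "\<gamma> h = (1 - t) * \<gamma> q + t * \<gamma> f" unfolding h_def by (rule \<gamma>lin[OF q f])
        hence "a - \<gamma> h = (1 - t) * (a - \<gamma> q) + t * (a - \<gamma> f)" by (simp add: algebra_simps)
        hence "(a - \<gamma> h)\<^sup>2 = ((1 - t) * (a - \<gamma> q) + t * (a - \<gamma> f))\<^sup>2" by simp
        also have "\<dots> \<le> (1 - t) * (a - \<gamma> q)\<^sup>2 + t * (a - \<gamma> f)\<^sup>2"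
        proof -
          have "(1 - t) * (a - \<gamma> q)\<^sup>2 + t * (a - \<gamma> f)\<^sup>2 - ((1 - t) * (a - \<gamma> q) + t * (a - \<gamma> f))\<^sup>2
              = t * (1 - t) * (\<gamma> q - \<gamma> f)\<^sup>2" by (simp add: power2_eq_square algebra_simps)
          moreover have "0 \<le> t * (1 - t) * (\<gamma> q - \<gamma> f)\<^sup>2" using t by simp
          ultimately show ?thesis by linarith
        qed
        finally have "(a - \<gamma> h)\<^sup>2 * D \<le> ((1 - t) * (a - \<gamma> q)\<^sup>2 + t * (a - \<gamma> f)\<^sup>2) * D"
          using D0 by (simp add: mult_right_mono)
        also have "\<dots> = (1 - t) * ((a - \<gamma> q)\<^sup>2 * D) + t * ((a - \<gamma> f)\<^sup>2 * D)" by (simp add: algebra_simps)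
        also have "\<dots> \<le> (1 - t) * b + t * b"
          using qb fb t by (intro add_mono mult_left_mono) auto
        also have "(1 - t) * b + t * b = b" by (simp add: algebra_simps)
        finally have "h \<in> C" unfolding Cdef using hL2 by simp
        hence "dist2 M q g \<le> dist2 M h g" by (rule near)
        moreover have "dist2 M q g = ip M u u" unfolding u_def ip_self dist2_def by simp
        moreover have "dist2 M h g = (LINT x|M. (u x + t * v x)\<^sup>2)"
          unfolding dist2_def h_def u_def v_def by (simp add: algebra_simps)
        moreover have "\<dots> = ip M u u + 2 * t * ip M u v + t\<^sup>2 * ip M v v" by (rule sq_expand[OF u v])
        ultimately have "0 \<le> t * (2 * ip M u v + t * ip M v v)" by (simp add: power2_eq_square algebra_simps)
        thus ?thesis using t by (simp add: zero_le_mult_iff)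
      qed
      have uv: "0 \<le> ip M u v"
      proof (rule ccontr)
        assume neg: "\<not> 0 \<le> ip M u v"
        have vv: "0 \<le> ip M v v" unfolding ip_self by simp
        define t where "t = min 1 (- ip M u v / (ip M v v + 1))"
        have "ip M u v / (ip M v v + 1) < 0" using neg vv by (intro divide_neg_pos) auto
        hence t0: "0 < t" by (simp add: t_def)
        have t1: "t \<le> 1" by (simp add: t_def)
        have "t * ip M v v \<le> (- ip M u v / (ip M v v + 1)) * ip M v v"
          using vv by (intro mult_right_mono) (auto simp: t_def)
        also have "\<dots> \<le> - ip M u v"
        proof -
          have "ip M v v / (ip M v v + 1) \<le> 1" using vv by simp
          hence "(- ip M u v) * (ip M v v / (ip M v v + 1)) \<le> (- ip M u v) * 1"
            using neg by (intro mult_left_mono) auto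
          thus ?thesis by simp
        qed
        finally have "2 * ip M u v + t * ip M v v < 0" using neg by linarith
        with key[OF t0 t1] show False by linarith
      qed
      have "dist2 M g f = (LINT x|M. (u x + 1 * v x)\<^sup>2)"
        unfolding dist2_def u_def v_def by (simp add: power2_commute algebra_simps)
      also have "\<dots> = ip M u u + 2 * 1 * ip M u v + 1\<^sup>2 * ip M v v" by (rule sq_expand[OF u v])
      finally have "dist2 M g f = ip M u u + 2 * ip M u v + ip M v v" by simp
      moreover have "dist2 M q f = ip M v v" unfolding v_def ip_self dist2_def by (simp add: power2_commute)
      moreover have "0 \<le> ip M u u" unfolding ip_self by simp
      ultimately show "dist2 M q f \<le> dist2 M g f" using uv by linarith
    qed
  }
qed



lemma slab: "(x::real) \<ge> 1 \<Longrightarrow> x < 4^J \<Longrightarrow> \<exists>j<J. 4^j \<le> x \<and> x \<le> 4^(Suc j)"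
proof (induction J)
  case 0 thus ?case by simp
next
  case (Suc J)
  show ?case
  proof (cases "x < 4^J")
    case True
    with Suc obtain j where "j < J" "4^j \<le> x \<and> x \<le> 4^(Suc j)" by auto
    thus ?thesis by (intro exI[of _ j]) auto
  next
    case False
    thus ?thesis using Suc.prems by (intro exI[of _ J]) auto
  qed
qed

lemma exponent_bound:
  fixes L T R S :: real
  assumes L0: "L \<ge> 0" and T0: "T > 0" and TR: "T \<le> R" and RT: "R \<le> 4 * T" and A: "4 * L * R < S\<^sup>2"
  shows "3/2 * L \<le> sqrt (L / T) * \<bar>S\<bar> - (L / T) * R / 2"
proof -
  define u where "u = sqrt (R / T)"
  have R0: "R > 0" using T0 TR by linarith
  have u1: "1 \<le> u" unfolding u_def using TR T0 by (simp add: field_simps)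
  have "R / T \<le> 4" using RT T0 by (simp add: field_simps)
  hence "u \<le> sqrt 4" unfolding u_def by (rule real_sqrt_le_mono)
  hence u2: "u \<le> 2" by simp
  have uu: "u\<^sup>2 = R / T" unfolding u_def using R0 T0 by simp
  have "sqrt (4 * L * R) \<le> sqrt (S\<^sup>2)" using A by (intro real_sqrt_le_mono) simp
  hence "2 * sqrt (L * R) \<le> \<bar>S\<bar>" by (simp add: real_sqrt_mult)
  hence "sqrt (L / T) * (2 * sqrt (L * R)) \<le> sqrt (L / T) * \<bar>S\<bar>" by (intro mult_left_mono) (use L0 T0 in auto)
  moreover have "sqrt (L / T) * (2 * sqrt (L * R)) = 2 * L * u"
  proof -
    have "sqrt (L / T) * sqrt (L * R) = sqrt (L * L * (R / T))" by (simp add: real_sqrt_mult[symmetric] field_simps)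
    also have "\<dots> = sqrt (L * L) * sqrt (R / T)" by (rule real_sqrt_mult)
    also have "\<dots> = L * u" unfolding u_def using L0 by simp
    finally show ?thesis by simp
  qed
  moreover have "(L / T) * R / 2 = L * u\<^sup>2 / 2" unfolding uu by simp
  moreover have "3/2 * L \<le> 2 * L * u - L * u\<^sup>2 / 2"
  proof -
    have "2 * L * u - L * u\<^sup>2 / 2 - 3/2 * L = L * ((u - 1) * (3 - u)) / 2" by (simp add: power2_eq_square algebra_simps)
    moreover have "0 \<le> L * ((u - 1) * (3 - u)) / 2" using L0 u1 u2 by simp
    ultimately show ?thesis by linarith
  qed
  ultimately show ?thesis by linarith
qed

lemma final_arith:
  fixes L :: real assumes L0: "L \<ge> 0"
  defines "J \<equiv> nat \<lceil>L\<rceil>"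
  shows "2 * real J * exp (-(3/2) * L) + 2 * (1/4)^J \<le> 5 * exp (-L)"
proof -
  have JL: "L \<le> real J" and JL1: "real J \<le> L + 1" unfolding J_def using L0 by linarith+
  have "(1/4::real)^J \<le> exp (-1)^J"
  proof (intro power_mono)
    have "exp 1 \<le> (4::real)" using exp_le by simp
    hence "1/4 \<le> 1 / exp (1::real)" by (simp add: field_simps)
    thus "1/4 \<le> exp (-1::real)" by (simp add: exp_minus field_simps)
  qed simp
  also have "\<dots> = exp (real J * (-1))" by (rule exp_of_nat_mult[symmetric])
  also have "\<dots> \<le> exp (-L)" using JL by simp
  finally have a: "(1/4::real)^J \<le> exp (-L)" .
  have "2 * (L + 1) \<le> 3 * exp (L / 2)"
  proof -
    have t1: "1 + L/2 + (L/2)\<^sup>2/2 \<le> exp (L/2)" using L0 by (intro exp_lower_Taylor_quadratic) simp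
    have t2: "2 * (L + 1) \<le> 3 * (1 + L/2 + (L/2)\<^sup>2/2)"
    proof -
      have "3 * (1 + L/2 + (L/2)\<^sup>2/2) - 2 * (L + 1) = 3/8 * (L - 2/3)\<^sup>2 + 5/6"
        by (simp add: power2_eq_square field_simps)
      moreover have "0 \<le> 3/8 * (L - 2/3)\<^sup>2 + 5/6" by simp
      ultimately show ?thesis by linarith
    qed
    have t3: "3 * (1 + L/2 + (L/2)\<^sup>2/2) \<le> 3 * exp (L/2)" using t1 by simp
    show ?thesis using t2 t3 by (rule order.trans)
  qed
  hence "2 * (L + 1) * exp (-(L/2)) \<le> 3"
    by (simp add: exp_minus field_simps)
  hence "2 * real J * exp (-(L/2)) \<le> 3"
    using JL1 by (smt (verit) exp_gt_zero mult_right_mono)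
  hence "2 * real J * exp (-(L/2)) * exp (-L) \<le> 3 * exp (-L)" by (intro mult_right_mono) auto
  moreover have "exp (-(3/2) * L) = exp (-(L/2)) * exp (-L)" by (simp add: exp_add[symmetric])
  ultimately have b: "2 * real J * exp (-(3/2) * L) \<le> 3 * exp (-L)" by (simp add: mult.assoc)
  show ?thesis using a b by linarith
qed




lemma markov_real:
  assumes "prob_space \<Omega>" and um: "u \<in> borel_measurable \<Omega>" and u0: "\<And>\<omega>. \<omega> \<in> space \<Omega> \<Longrightarrow> 0 \<le> u \<omega>"
    and int: "(\<integral>\<^sup>+\<omega>. ennreal (u \<omega>) \<partial>\<Omega>) \<le> ennreal K" and t: "t > 0" and K: "K \<ge> 0"
  shows "measure \<Omega> {\<omega>\<in>space \<Omega>. t \<le> u \<omega>} \<le> K / t"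
proof -
  interpret prob_space \<Omega> by fact
  have "emeasure \<Omega> {\<omega>\<in>space \<Omega>. 1 \<le> ennreal (1/t) * ennreal (u \<omega>)} \<le>
      ennreal (1/t) * (\<integral>\<^sup>+\<omega>. ennreal (u \<omega>) * indicator (space \<Omega>) \<omega> \<partial>\<Omega>)"
    using um by (intro nn_integral_Markov_inequality) auto
  also have "(\<integral>\<^sup>+\<omega>. ennreal (u \<omega>) * indicator (space \<Omega>) \<omega> \<partial>\<Omega>) = (\<integral>\<^sup>+\<omega>. ennreal (u \<omega>) \<partial>\<Omega>)"
    by (intro nn_integral_cong) auto
  also have "ennreal (1/t) * \<dots> \<le> ennreal (1/t) * ennreal K" using int by (intro mult_left_mono) auto
  also have "\<dots> = ennreal ((1/t) * K)" by (rule ennreal_mult'[symmetric]) (use t in simp)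
  also have "(1/t) * K = K / t" by simp
  also have "{\<omega>\<in>space \<Omega>. 1 \<le> ennreal (1/t) * ennreal (u \<omega>)} = {\<omega>\<in>space \<Omega>. t \<le> u \<omega>}"
  proof -
    have "1 \<le> ennreal (1/t) * ennreal (u \<omega>) \<longleftrightarrow> t \<le> u \<omega>" if "\<omega> \<in> space \<Omega>" for \<omega>
    proof -
      have "ennreal (1/t) * ennreal (u \<omega>) = ennreal (u \<omega> / t)" using t u0[OF that] by (simp add: ennreal_mult[symmetric])
      thus ?thesis using t by (simp add: field_simps)
    qed
    thus ?thesis by auto
  qed
  finally have "emeasure \<Omega> {\<omega>\<in>space \<Omega>. t \<le> u \<omega>} \<le> ennreal (K / t)" .
  thus ?thesis using K t by (simp add: emeasure_eq_measure)
qed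





lemma quad_pos: "0 \<le> 1 + x + x\<^sup>2/(2::real)"
proof -
  have e: "1 + x + x\<^sup>2/2 = ((x + 1)\<^sup>2 + 1) / 2" by (simp add: power2_eq_square field_simps)
  show ?thesis by (subst e) simp
qed

lemma density_basics:
  fixes f :: "'a \<Rightarrow> real"
  assumes fm: "f \<in> borel_measurable M" and f0: "\<forall>x\<in>space M. 0 \<le> f x" and f1: "(\<integral>\<^sup>+x. ennreal (f x) \<partial>M) = 1"
  shows "integrable M f" "(LINT x|M. f x) = 1" "prob_space (density M f)"
proof -
  show fi: "integrable M f" using fm f0 f1 by (intro integrableI_nonneg) auto
  have "(\<integral>\<^sup>+x. ennreal (f x) \<partial>M) = ennreal (LINT x|M. f x)"
    using fi f0 by (intro nn_integral_eq_integral) auto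
  moreover have "0 \<le> (LINT x|M. f x)" using f0 by (intro Bochner_Integration.integral_nonneg) auto
  ultimately show "(LINT x|M. f x) = 1" using f1 by simp
  show "prob_space (density M f)"
  proof (rule prob_spaceI)
    have "emeasure (density M f) (space (density M f)) = (\<integral>\<^sup>+x. ennreal (f x) * indicator (space M) x \<partial>M)"
      using fm by (simp add: emeasure_density)
    also have "\<dots> = (\<integral>\<^sup>+x. ennreal (f x) \<partial>M)" by (intro nn_integral_cong) auto
    finally show "emeasure (density M f) (space (density M f)) = 1" using f1 by simp
  qed
qed

lemma fY_int:
  fixes f Y :: "'a \<Rightarrow> real"
  assumes fm: "f \<in> borel_measurable M" and f0: "\<forall>x\<in>space M. 0 \<le> f x" and fi: "integrable M f"
    and Ym: "Y \<in> borel_measurable M" and Y2: "integrable M (\<lambda>x. f x * (Y x)\<^sup>2)"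
  shows "integrable M (\<lambda>x. f x * Y x)"
proof (rule Bochner_Integration.integrable_bound[where f="\<lambda>x. f x + f x * (Y x)\<^sup>2"])
  show "integrable M (\<lambda>x. f x + f x * (Y x)\<^sup>2)" using fi Y2 by (rule Bochner_Integration.integrable_add)
  show "(\<lambda>x. f x * Y x) \<in> borel_measurable M" using fm Ym by measurable
  show "AE x in M. norm (f x * Y x) \<le> norm (f x + f x * (Y x)\<^sup>2)"
  proof (intro AE_I2)
    fix x assume x: "x \<in> space M"
    have fx: "0 \<le> f x" using f0 x by auto
    have "\<bar>Y x\<bar> \<le> 1 + (Y x)\<^sup>2"
    proof (cases "\<bar>Y x\<bar> \<le> 1")
      case True thus ?thesis by (smt (verit) zero_le_power2)
    next
      case False
      hence "\<bar>Y x\<bar> * 1 \<le> \<bar>Y x\<bar> * \<bar>Y x\<bar>" by (intro mult_left_mono) auto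
      thus ?thesis by (simp add: power2_eq_square)
    qed
    hence "f x * \<bar>Y x\<bar> \<le> f x * (1 + (Y x)\<^sup>2)" using fx by (intro mult_left_mono) auto
    thus "norm (f x * Y x) \<le> norm (f x + f x * (Y x)\<^sup>2)" using fx by (simp add: abs_mult algebra_simps)
  qed
qed

lemma one_step:
  fixes f Y :: "'a \<Rightarrow> real" and l s :: real
  assumes fm: "f \<in> borel_measurable M" and f0: "\<forall>x\<in>space M. 0 \<le> f x" and f1: "(\<integral>\<^sup>+x. ennreal (f x) \<partial>M) = 1"
    and Ym: "Y \<in> borel_measurable M" and Y2: "integrable M (\<lambda>x. f x * (Y x)\<^sup>2)"
    and s: "(LINT x|M. f x * (Y x)\<^sup>2) \<le> s"
  defines "\<mu> \<equiv> (LINT x|M. f x * Y x)"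
  shows "(\<integral>\<^sup>+y. ennreal (exp (l * (Y y - \<mu>) - l\<^sup>2 * ((Y y)\<^sup>2 + s) / 2)) \<partial>density M f) \<le> 1"
proof -
  have fi: "integrable M f" and fI: "(LINT x|M. f x) = 1" using density_basics[OF fm f0 f1] by auto
  have fY: "integrable M (\<lambda>x. f x * Y x)" using fY_int[OF fm f0 fi Ym Y2] .
  define t where "t = l * \<mu> + l\<^sup>2 * s / 2"
  define E where "E = exp (- t)"
  have E0: "E > 0" by (simp add: E_def)
  define h where "h x = E * f x + (E * l) * (f x * Y x) + (E * l\<^sup>2 / 2) * (f x * (Y x)\<^sup>2)" for x
  have h_eq: "h x = f x * (E * (1 + l * Y x + (l * Y x)\<^sup>2 / 2))" for x
    unfolding h_def by (simp add: power2_eq_square algebra_simps)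
  have hi: "integrable M h" unfolding h_def using fi fY Y2
    by (intro Bochner_Integration.integrable_add integrable_mult_right) auto
  have h0: "0 \<le> h x" if "x \<in> space M" for x
    unfolding h_eq using f0 that E0 quad_pos[of "l * Y x"] by simp
  have pw: "ennreal (f y) * ennreal (exp (l * (Y y - \<mu>) - l\<^sup>2 * ((Y y)\<^sup>2 + s) / 2)) \<le> ennreal (h y)"
    if y: "y \<in> space M" for y
  proof -
    have fy: "0 \<le> f y" using f0 y by auto
    have "exp (l * (Y y - \<mu>) - l\<^sup>2 * ((Y y)\<^sup>2 + s) / 2) = E * exp (l * Y y - (l * Y y)\<^sup>2 / 2)"
      unfolding E_def t_def by (simp add: exp_add[symmetric] power_mult_distrib algebra_simps)
    also have "\<dots> \<le> E * (1 + l * Y y + (l * Y y)\<^sup>2 / 2)"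
      using E0 exp_quad_le[of "l * Y y"] by (intro mult_left_mono) auto
    finally have "f y * exp (l * (Y y - \<mu>) - l\<^sup>2 * ((Y y)\<^sup>2 + s) / 2) \<le> h y"
      unfolding h_eq using fy by (intro mult_left_mono) auto
    hence "ennreal (f y * exp (l * (Y y - \<mu>) - l\<^sup>2 * ((Y y)\<^sup>2 + s) / 2)) \<le> ennreal (h y)"
      by (rule ennreal_leI)
    thus ?thesis using fy by (simp add: ennreal_mult[symmetric])
  qed
  have real_bd: "(LINT y|M. h y) \<le> 1"
  proof -
  have "(LINT y|M. h y) = E * (LINT x|M. f x) + (E * l) * \<mu> + (E * l\<^sup>2 / 2) * (LINT x|M. f x * (Y x)\<^sup>2)"
    unfolding h_def \<mu>_def using fi fY Y2
    by (subst Bochner_Integration.integral_add, (auto intro!: Bochner_Integration.integrable_add)[2])+ simp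
  also have "\<dots> \<le> E * (1 + t)"
  proof -
    have "(E * l\<^sup>2 / 2) * (LINT x|M. f x * (Y x)\<^sup>2) \<le> (E * l\<^sup>2 / 2) * s"
      using s E0 by (intro mult_left_mono) auto
    thus ?thesis unfolding fI t_def by (simp add: algebra_simps)
  qed
  also have "E * (1 + t) \<le> 1"
  proof -
    have "E * (1 + t) \<le> E * exp t" using E0 exp_ge_add_one_self[of t] by (intro mult_left_mono) auto
    thus ?thesis by (simp add: E_def exp_minus field_simps)
  qed
  finally show ?thesis .
  qed
  have "(\<integral>\<^sup>+y. ennreal (exp (l * (Y y - \<mu>) - l\<^sup>2 * ((Y y)\<^sup>2 + s) / 2)) \<partial>density M f)
      = (\<integral>\<^sup>+y. ennreal (f y) * ennreal (exp (l * (Y y - \<mu>) - l\<^sup>2 * ((Y y)\<^sup>2 + s) / 2)) \<partial>M)"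
    using fm Ym by (intro nn_integral_density) auto
  also have "\<dots> \<le> (\<integral>\<^sup>+y. ennreal (h y) \<partial>M)" using pw by (intro nn_integral_mono) auto
  also have "\<dots> = ennreal (LINT y|M. h y)" using hi h0 by (intro nn_integral_eq_integral) auto
  also have "\<dots> \<le> ennreal 1" using real_bd by (rule ennreal_leI)
  finally show ?thesis by simp
qed



lemma concentration:
  fixes M :: "'a measure" and f Y :: "'a \<Rightarrow> real" and N :: nat and s L \<mu> :: real
  assumes fm: "f \<in> borel_measurable M" and f0: "\<forall>x\<in>space M. 0 \<le> f x" and f1: "(\<integral>\<^sup>+x. ennreal (f x) \<partial>M) = 1"
    and Ym: "Y \<in> borel_measurable M" and Y2: "integrable M (\<lambda>x. f x * (Y x)\<^sup>2)"
    and s: "(LINT x|M. f x * (Y x)\<^sup>2) \<le> s" and s0: "s > 0" and L0: "L \<ge> 0" and N0: "N > 0"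
  defines "\<Omega> \<equiv> PiM {..<N} (\<lambda>_. density M f)" and "\<mu> \<equiv> (LINT x|M. f x * Y x)"
  shows "measure \<Omega> {\<omega> \<in> space \<Omega>. 4 * L * ((\<Sum>i<N. (Y (\<omega> i))\<^sup>2) + real N * s) < ((\<Sum>i<N. Y (\<omega> i)) - real N * \<mu>)\<^sup>2}
     \<le> 5 * exp (-L)"
proof -
  define P where "P = density M f"
  have Pp: "prob_space P" unfolding P_def using density_basics[OF fm f0 f1] by simp
  interpret PS: product_prob_space "\<lambda>_. P" "{..<N}"
    by (simp add: product_prob_space_def product_prob_space_axioms_def product_sigma_finite_def Pp
        prob_space_imp_sigma_finite)
  have OmP: "\<Omega> = PiM {..<N} (\<lambda>_. P)" by (simp add: \<Omega>_def P_def)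
  interpret OM: prob_space \<Omega> unfolding OmP by (rule prob_space_PiM) (simp add: Pp)
  have YP[measurable]: "Y \<in> borel_measurable P" using Ym by (simp add: P_def)
  define S where "S \<omega> = (\<Sum>i<N. Y (\<omega> i)) - N * \<mu>" for \<omega> :: "nat \<Rightarrow> 'a"
  define R where "R \<omega> = (\<Sum>i<N. (Y (\<omega> i))\<^sup>2) + N * s" for \<omega> :: "nat \<Rightarrow> 'a"
  define g where "g l y = exp (l * (Y y - \<mu>) - l\<^sup>2 * ((Y y)\<^sup>2 + s) / 2)" for l y
  define G where "G l \<omega> = (\<Prod>i<N. g l (\<omega> i))" for l \<omega>
  have gm[measurable]: "g l \<in> borel_measurable P" for l unfolding g_def by measurable
  have Gm[measurable]: "G l \<in> borel_measurable \<Omega>" for l unfolding G_def OmP by measurable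
  have Rm[measurable]: "R \<in> borel_measurable \<Omega>" unfolding R_def OmP by measurable
  have Sm[measurable]: "S \<in> borel_measurable \<Omega>" unfolding S_def OmP by measurable
  have G_eq: "G l \<omega> = exp (l * S \<omega> - l\<^sup>2 * R \<omega> / 2)" for l \<omega>
  proof -
    have "G l \<omega> = exp (\<Sum>i<N. l * (Y (\<omega> i) - \<mu>) - l\<^sup>2 * ((Y (\<omega> i))\<^sup>2 + s) / 2)"
      unfolding G_def g_def by (simp add: exp_sum)
    also have "(\<Sum>i<N. l * (Y (\<omega> i) - \<mu>) - l\<^sup>2 * ((Y (\<omega> i))\<^sup>2 + s) / 2) = l * S \<omega> - l\<^sup>2 * R \<omega> / 2"
      unfolding S_def R_def
      by (simp add: sum_subtractf sum.distrib sum_distrib_left sum_divide_distrib[symmetric] algebra_simps)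
    finally show ?thesis .
  qed
  have G_int: "(\<integral>\<^sup>+\<omega>. ennreal (G l \<omega>) \<partial>\<Omega>) \<le> ennreal 1" for l
  proof -
    have "(\<integral>\<^sup>+\<omega>. ennreal (G l \<omega>) \<partial>\<Omega>) = (\<integral>\<^sup>+\<omega>. (\<Prod>i\<in>{..<N}. ennreal (g l (\<omega> i))) \<partial>PiM {..<N} (\<lambda>_. P))"
      unfolding G_def OmP by (intro nn_integral_cong) (simp add: prod_ennreal g_def)
    also have "\<dots> = (\<Prod>i\<in>{..<N}. (\<integral>\<^sup>+y. ennreal (g l y) \<partial>P))"
      by (rule PS.product_nn_integral_prod) auto
    also have "\<dots> \<le> 1"
    proof -
      have c1: "(\<integral>\<^sup>+y. ennreal (g l y) \<partial>P) \<le> 1"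
        unfolding g_def P_def \<mu>_def by (rule one_step[OF fm f0 f1 Ym Y2 s])
      thus ?thesis by (simp add: power_le_one)
    qed
    finally show ?thesis by simp
  qed
  have G_markov: "measure \<Omega> {\<omega>\<in>space \<Omega>. exp (3/2 * L) \<le> G l \<omega>} \<le> exp (-(3/2) * L)" for l
  proof -
    have "measure \<Omega> {\<omega>\<in>space \<Omega>. exp (3/2 * L) \<le> G l \<omega>} \<le> 1 / exp (3/2 * L)"
      by (rule markov_real[OF OM.prob_space_axioms Gm _ G_int]) (auto simp: G_def g_def intro: prod_nonneg)
    thus ?thesis by (simp add: exp_minus field_simps)
  qed
  have R_int: "(\<integral>\<^sup>+\<omega>. ennreal (R \<omega>) \<partial>\<Omega>) \<le> ennreal (2 * real N * s)"
  proof -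
    have comp: "(\<integral>\<^sup>+\<omega>. ennreal ((Y (\<omega> i))\<^sup>2) \<partial>\<Omega>) \<le> ennreal s" if i: "i \<in> {..<N}" for i
    proof -
      have "(\<integral>\<^sup>+\<omega>. ennreal ((Y (\<omega> i))\<^sup>2) \<partial>\<Omega>) = (\<integral>\<^sup>+y. ennreal ((Y y)\<^sup>2) \<partial>distr \<Omega> P (\<lambda>\<omega>. \<omega> i))"
        using i by (subst nn_integral_distr) (auto simp: OmP)
      also have "distr \<Omega> P (\<lambda>\<omega>. \<omega> i) = P" unfolding OmP by (rule PS.PiM_component[OF i])
      also have "(\<integral>\<^sup>+y. ennreal ((Y y)\<^sup>2) \<partial>P) = (\<integral>\<^sup>+y. ennreal (f y) * ennreal ((Y y)\<^sup>2) \<partial>M)"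
        unfolding P_def using fm Ym by (intro nn_integral_density) auto
      also have "\<dots> = (\<integral>\<^sup>+y. ennreal (f y * (Y y)\<^sup>2) \<partial>M)"
        using f0 by (intro nn_integral_cong) (simp add: ennreal_mult)
      also have "\<dots> = ennreal (LINT y|M. f y * (Y y)\<^sup>2)"
        using Y2 f0 by (intro nn_integral_eq_integral) auto
      also have "\<dots> \<le> ennreal s" using s by (rule ennreal_leI)
      finally show ?thesis .
    qed
    have "(\<integral>\<^sup>+\<omega>. ennreal (R \<omega>) \<partial>\<Omega>) = (\<integral>\<^sup>+\<omega>. (\<Sum>i<N. ennreal ((Y (\<omega> i))\<^sup>2)) + ennreal (N * s) \<partial>\<Omega>)"
      unfolding R_def using s0 by (intro nn_integral_cong) (simp add: ennreal_plus sum_nonneg)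
    also have "\<dots> = (\<integral>\<^sup>+\<omega>. (\<Sum>i<N. ennreal ((Y (\<omega> i))\<^sup>2)) \<partial>\<Omega>) + (\<integral>\<^sup>+\<omega>. ennreal (N * s) \<partial>\<Omega>)"
      by (rule nn_integral_add) (auto simp: OmP)
    also have "(\<integral>\<^sup>+\<omega>. (\<Sum>i<N. ennreal ((Y (\<omega> i))\<^sup>2)) \<partial>\<Omega>) = (\<Sum>i<N. (\<integral>\<^sup>+\<omega>. ennreal ((Y (\<omega> i))\<^sup>2) \<partial>\<Omega>))"
      by (rule nn_integral_sum) (auto simp: OmP)
    also have "(\<integral>\<^sup>+\<omega>. ennreal (N * s) \<partial>\<Omega>) = ennreal (N * s)"
      by (simp add: OM.emeasure_space_1)
    also have "(\<Sum>i<N. (\<integral>\<^sup>+\<omega>. ennreal ((Y (\<omega> i))\<^sup>2) \<partial>\<Omega>)) + ennreal (N * s) \<le> (\<Sum>i<N. ennreal s) + ennreal (N * s)"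
      using comp by (intro add_mono sum_mono) auto
    also have "(\<Sum>i<N. ennreal s) + ennreal (N * s) = ennreal (N * s) + ennreal (N * s)" using s0 by (simp add: ennreal_mult ennreal_of_nat_eq_real_of_nat)
    also have "\<dots> = ennreal (2 * real N * s)" using s0 by (simp flip: ennreal_plus)
    finally show ?thesis .
  qed
  define J where "J = nat \<lceil>L\<rceil>"
  have R_markov: "measure \<Omega> {\<omega>\<in>space \<Omega>. (4::real)^J * real N * s \<le> R \<omega>} \<le> 2 * (1/4)^J"
  proof -
    have "measure \<Omega> {\<omega>\<in>space \<Omega>. (4::real)^J * real N * s \<le> R \<omega>} \<le> (2 * real N * s) / ((4::real)^J * real N * s)"
      using N0 s0 by (intro markov_real[OF OM.prob_space_axioms Rm _ R_int]) (auto simp: R_def intro!: add_nonneg_nonneg sum_nonneg)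
    also have "\<dots> = 2 * (1/4)^J" using N0 s0 by (simp add: power_one_over field_simps)
    finally show ?thesis .
  qed
  define T where "T j = (4::real)^j * real N * s" for j :: nat
  define lam where "lam j = sqrt (L / T j)" for j
  define U where "U j = {\<omega>\<in>space \<Omega>. exp (3/2 * L) \<le> G (lam j) \<omega>} \<union> {\<omega>\<in>space \<Omega>. exp (3/2 * L) \<le> G (- lam j) \<omega>}" for j
  define W where "W = {\<omega>\<in>space \<Omega>. (4::real)^J * real N * s \<le> R \<omega>}"
  define A where "A = {\<omega> \<in> space \<Omega>. 4 * L * ((\<Sum>i<N. (Y (\<omega> i))\<^sup>2) + real N * s) < ((\<Sum>i<N. Y (\<omega> i)) - real N * \<mu>)\<^sup>2}"
  have Usets: "U j \<in> sets \<Omega>" for j unfolding U_def by measurable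
  have Wsets: "W \<in> sets \<Omega>" unfolding W_def by measurable
  have cover: "A \<subseteq> (\<Union>j<J. U j) \<union> W"
  proof
    fix \<omega> assume "\<omega> \<in> A"
    hence sp: "\<omega> \<in> space \<Omega>" and AS: "4 * L * R \<omega> < (S \<omega>)\<^sup>2" unfolding A_def R_def S_def by auto
    show "\<omega> \<in> (\<Union>j<J. U j) \<union> W"
    proof (cases "(4::real)^J * real N * s \<le> R \<omega>")
      case True thus ?thesis using sp by (simp add: W_def)
    next
      case False
      have Ns: "N * s > 0" using N0 s0 by simp
      have "N * s \<le> R \<omega>" unfolding R_def by (simp add: sum_nonneg)
      hence x1: "1 \<le> R \<omega> / (N * s)" using Ns by simp
      have x2: "R \<omega> / (N * s) < 4^J" using False Ns by (simp add: field_simps)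
      obtain j where j: "j < J" "4^j \<le> R \<omega> / (N * s)" "R \<omega> / (N * s) \<le> 4^(Suc j)"
        using slab[OF x1 x2] by auto
      have T0: "T j > 0" unfolding T_def using Ns by (simp add: mult.assoc)
      have TR: "T j \<le> R \<omega>" using j(2) Ns unfolding T_def by (simp add: field_simps)
      have RT: "R \<omega> \<le> 4 * T j" using j(3) Ns unfolding T_def by (simp add: field_simps)
      have eb: "3/2 * L \<le> lam j * \<bar>S \<omega>\<bar> - (L / T j) * R \<omega> / 2"
        unfolding lam_def by (rule exponent_bound[OF L0 T0 TR RT AS])
      have ll: "(lam j)\<^sup>2 = L / T j" unfolding lam_def using L0 T0 by simp
      have "\<omega> \<in> U j"
      proof (cases "0 \<le> S \<omega>")
        case True
        have "G (lam j) \<omega> = exp (lam j * \<bar>S \<omega>\<bar> - (L / T j) * R \<omega> / 2)"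
          unfolding G_eq ll[symmetric] using True by simp
        hence "exp (3/2 * L) \<le> G (lam j) \<omega>" using eb by simp
        thus ?thesis using sp by (simp add: U_def)
      next
        case False
        have "G (- lam j) \<omega> = exp (lam j * \<bar>S \<omega>\<bar> - (L / T j) * R \<omega> / 2)"
          unfolding G_eq ll[symmetric] using False by simp
        hence "exp (3/2 * L) \<le> G (- lam j) \<omega>" using eb by simp
        thus ?thesis using sp by (simp add: U_def)
      qed
      thus ?thesis using j(1) by auto
    qed
  qed
  have "measure \<Omega> A \<le> measure \<Omega> ((\<Union>j<J. U j) \<union> W)"
    using cover Usets Wsets by (intro OM.finite_measure_mono) auto
  also have "\<dots> \<le> measure \<Omega> (\<Union>j<J. U j) + measure \<Omega> W"
    using Usets Wsets by (intro measure_Un_le) auto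
  also have "measure \<Omega> (\<Union>j<J. U j) \<le> (\<Sum>j<J. measure \<Omega> (U j))"
    using Usets by (intro OM.finite_measure_subadditive_finite) auto
  also have "\<dots> \<le> (\<Sum>j<J. 2 * exp (-(3/2) * L))"
  proof (intro sum_mono)
    fix j
    have "measure \<Omega> (U j) \<le> measure \<Omega> {\<omega>\<in>space \<Omega>. exp (3/2 * L) \<le> G (lam j) \<omega>} + measure \<Omega> {\<omega>\<in>space \<Omega>. exp (3/2 * L) \<le> G (- lam j) \<omega>}"
      unfolding U_def by (intro measure_Un_le) auto
    also have "\<dots> \<le> exp (-(3/2) * L) + exp (-(3/2) * L)" by (intro add_mono G_markov)
    finally show "measure \<Omega> (U j) \<le> 2 * exp (-(3/2) * L)" by simp
  qed
  also have "measure \<Omega> W \<le> 2 * (1/4)^J" unfolding W_def by (rule R_markov)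
  finally have "measure \<Omega> A \<le> 2 * real J * exp (-(3/2) * L) + 2 * (1/4)^J" by simp
  also have "\<dots> \<le> 5 * exp (-L)" unfolding J_def by (rule final_arith[OF L0])
  finally show ?thesis unfolding A_def .
qed



lemma sq_powr: "((y::real)\<^sup>2) powr p = \<bar>y\<bar> powr (2 * p)"
proof (cases "y = 0")
  case False
  have e: "(y\<^sup>2) = \<bar>y\<bar> powr 2" using False by simp
  have "(y\<^sup>2) powr p = (\<bar>y\<bar> powr 2) powr p" by (subst e) (rule refl)
  also have "\<dots> = \<bar>y\<bar> powr (2 * p)" by (rule powr_powr)
  finally show ?thesis .
qed simp

lemma moment_bound:
  fixes M :: "'a measure" and f :: "'a \<Rightarrow> real"
  assumes fm: "f \<in> borel_measurable M" and f0: "\<forall>x\<in>space M. 0 \<le> f x"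
    and fi: "integrable M f" and f1: "(LINT x|M. f x) = 1"
    and Y: "fs k \<in> L2 M" and D: "(LINT x|M. (fs k x)\<^sup>2) > 0"
    and H: "cond_H M f fs m c cs p" and k: "k < m"
  shows "integrable M (\<lambda>x. f x * (fs k x)\<^sup>2) \<and>
         (LINT x|M. f x * (fs k x)\<^sup>2) \<le> cs k * c * (LINT x|M. (fs k x)\<^sup>2)"
proof -
  define D where "D = (LINT x|M. (fs k x)\<^sup>2)"
  have D0: "D > 0" using D by (simp add: D_def)
  have Ym: "fs k \<in> borel_measurable M" using Y by (rule L2_meas)
  have Y2: "integrable M (\<lambda>x. (fs k x)\<^sup>2)" using Y by (rule L2_int)
  have p1: "1 \<le> p" and c0: "c > 0" and cs0: "cs k > 0" using H k by (auto simp: cond_H_def)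
  show ?thesis
  proof (cases "p = 1")
    case True
    hence fc: "\<forall>x\<in>space M. f x \<le> c" and cs1: "cs k = 1" using H k by (auto simp: cond_H_def)
    have b: "\<And>x. x \<in> space M \<Longrightarrow> f x * (fs k x)\<^sup>2 \<le> c * (fs k x)\<^sup>2"
      using fc by (intro mult_right_mono) auto
    have int: "integrable M (\<lambda>x. f x * (fs k x)\<^sup>2)"
    proof (rule Bochner_Integration.integrable_bound[where f="\<lambda>x. c * (fs k x)\<^sup>2"])
      show "integrable M (\<lambda>x. c * (fs k x)\<^sup>2)" using Y2 by simp
      show "(\<lambda>x. f x * (fs k x)\<^sup>2) \<in> borel_measurable M" using fm Ym by measurable
      show "AE x in M. norm (f x * (fs k x)\<^sup>2) \<le> norm (c * (fs k x)\<^sup>2)"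
        using b f0 c0 by (intro AE_I2) auto
    qed
    have "(LINT x|M. f x * (fs k x)\<^sup>2) \<le> (LINT x|M. c * (fs k x)\<^sup>2)"
      using int Y2 b by (intro integral_mono) auto
    thus ?thesis using int cs1 by simp
  next
    case pn1: False
    show ?thesis
    proof (cases "p = \<infinity>")
      case True
      hence bd: "\<forall>x\<in>space M. \<bar>fs k x\<bar> \<le> sqrt (cs k * D)" and c1: "c = 1"
        using H k pn1 by (auto simp: cond_H_def D_def)
      have b0: "\<And>x. x \<in> space M \<Longrightarrow> (fs k x)\<^sup>2 \<le> cs k * D"
      proof -
        fix x assume "x \<in> space M"
        hence "\<bar>fs k x\<bar> \<le> sqrt (cs k * D)" using bd by auto
        hence "\<bar>fs k x\<bar>\<^sup>2 \<le> (sqrt (cs k * D))\<^sup>2" by (intro power_mono) auto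
        thus "(fs k x)\<^sup>2 \<le> cs k * D" using cs0 D0 by simp
      qed
      have b: "\<And>x. x \<in> space M \<Longrightarrow> f x * (fs k x)\<^sup>2 \<le> (cs k * D) * f x"
        using b0 f0 by (simp add: mult.commute mult_left_mono)
      have int: "integrable M (\<lambda>x. f x * (fs k x)\<^sup>2)"
      proof (rule Bochner_Integration.integrable_bound[where f="\<lambda>x. (cs k * D) * f x"])
        show "integrable M (\<lambda>x. (cs k * D) * f x)" using fi by simp
        show "(\<lambda>x. f x * (fs k x)\<^sup>2) \<in> borel_measurable M" using fm Ym by measurable
        show "AE x in M. norm (f x * (fs k x)\<^sup>2) \<le> norm ((cs k * D) * f x)"
          using b f0 cs0 D0 by (intro AE_I2) auto
      qed
      have "(LINT x|M. f x * (fs k x)\<^sup>2) \<le> (LINT x|M. (cs k * D) * f x)"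
        using int fi b by (intro integral_mono) auto
      thus ?thesis using int c1 f1 by (simp add: D_def)
    next
      case pninf: False
      define p' where "p' = real_of_ereal p"
      define q where "q = p' / (p' - 1)"
      have pe: "p = ereal p'" using p1 pninf unfolding p'_def by (cases p) auto
      have p'1: "p' > 1" using p1 pn1 pe by (auto simp: one_ereal_def)
      have q1: "q > 1" using p'1 by (simp add: q_def)
      have pq: "1/p' + 1/q = 1" using p'1 by (simp add: q_def field_simps)
      have HH: "integrable M (\<lambda>x. \<bar>fs k x\<bar> powr (2 * p')) \<and>
           (LINT x|M. \<bar>fs k x\<bar> powr (2 * p')) powr (1 / p') \<le> cs k * D"
        "integrable M (\<lambda>x. \<bar>f x\<bar> powr q)" "(LINT x|M. \<bar>f x\<bar> powr q) powr (1 / q) \<le> c"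
        using H k pn1 pninf unfolding cond_H_def Let_def p'_def[symmetric] q_def[symmetric] D_def by auto
      define A where "A = cs k * D"
      define B where "B = c"
      have A0: "A > 0" using cs0 D0 by (simp add: A_def)
      have B0: "B > 0" using c0 by (simp add: B_def)
      define X where "X = (LINT x|M. \<bar>fs k x\<bar> powr (2 * p'))"
      define Z where "Z = (LINT x|M. \<bar>f x\<bar> powr q)"
      have X0: "0 \<le> X" unfolding X_def by simp
      have Z0: "0 \<le> Z" unfolding Z_def by simp
      have XA: "X \<le> A powr p'"
      proof -
        have "X = (X powr (1/p')) powr p'" using X0 p'1 by (simp add: powr_powr)
        also have "\<dots> \<le> A powr p'" using HH(1) p'1 by (intro powr_mono2) (auto simp: X_def A_def)
        finally show ?thesis .
      qed
      have ZB: "Z \<le> B powr q"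
      proof -
        have "Z = (Z powr (1/q)) powr q" using Z0 q1 by (simp add: powr_powr)
        also have "\<dots> \<le> B powr q" using HH(3) q1 by (intro powr_mono2) (auto simp: Z_def B_def)
        finally show ?thesis .
      qed
      define K1 where "K1 = A * B / (A powr p' * p')"
      define K2 where "K2 = A * B / (B powr q * q)"
      have K10: "K1 \<ge> 0" using A0 B0 p'1 by (simp add: K1_def)
      have K20: "K2 \<ge> 0" using A0 B0 q1 by (simp add: K2_def)
      have pw: "f x * (fs k x)\<^sup>2 \<le> K1 * \<bar>fs k x\<bar> powr (2 * p') + K2 * \<bar>f x\<bar> powr q"
        if x: "x \<in> space M" for x
      proof -
        have fx: "0 \<le> f x" using f0 x by auto
        have "((fs k x)\<^sup>2 / A) * (f x / B) \<le> ((fs k x)\<^sup>2 / A) powr p' / p' + (f x / B) powr q / q"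
          using A0 B0 fx p'1 q1 pq by (intro Youngs_inequality) auto
        hence "A * B * (((fs k x)\<^sup>2 / A) * (f x / B)) \<le> A * B * (((fs k x)\<^sup>2 / A) powr p' / p' + (f x / B) powr q / q)"
          using A0 B0 by (intro mult_left_mono) auto
        moreover have "A * B * (((fs k x)\<^sup>2 / A) * (f x / B)) = f x * (fs k x)\<^sup>2" using A0 B0 by simp
        moreover have "A * B * (((fs k x)\<^sup>2 / A) powr p' / p' + (f x / B) powr q / q) =
            K1 * \<bar>fs k x\<bar> powr (2 * p') + K2 * \<bar>f x\<bar> powr q"
          using A0 B0 fx by (simp add: powr_divide sq_powr K1_def K2_def field_simps)
        ultimately show ?thesis by simp
      qed
      have RI: "integrable M (\<lambda>x. K1 * \<bar>fs k x\<bar> powr (2 * p') + K2 * \<bar>f x\<bar> powr q)"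
        using HH by (intro Bochner_Integration.integrable_add integrable_mult_right) auto
      have int: "integrable M (\<lambda>x. f x * (fs k x)\<^sup>2)"
      proof (rule Bochner_Integration.integrable_bound[OF RI])
        show "(\<lambda>x. f x * (fs k x)\<^sup>2) \<in> borel_measurable M" using fm Ym by measurable
        show "AE x in M. norm (f x * (fs k x)\<^sup>2) \<le> norm (K1 * \<bar>fs k x\<bar> powr (2 * p') + K2 * \<bar>f x\<bar> powr q)"
        proof (intro AE_I2)
          fix x assume x: "x \<in> space M"
          have "0 \<le> f x * (fs k x)\<^sup>2" using f0 x by auto
          moreover have "0 \<le> K1 * \<bar>fs k x\<bar> powr (2 * p') + K2 * \<bar>f x\<bar> powr q" using K10 K20 by auto
          ultimately show "norm (f x * (fs k x)\<^sup>2) \<le> norm (K1 * \<bar>fs k x\<bar> powr (2 * p') + K2 * \<bar>f x\<bar> powr q)"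
            using pw[OF x] by simp
        qed
      qed
      have "(LINT x|M. f x * (fs k x)\<^sup>2) \<le> (LINT x|M. K1 * \<bar>fs k x\<bar> powr (2 * p') + K2 * \<bar>f x\<bar> powr q)"
        using int RI pw by (intro integral_mono) auto
      also have "\<dots> = K1 * X + K2 * Z"
        using HH unfolding X_def Z_def by (subst Bochner_Integration.integral_add) auto
      also have "\<dots> \<le> K1 * A powr p' + K2 * B powr q"
        using XA ZB K10 K20 by (intro add_mono mult_left_mono) auto
      also have "\<dots> = A * B * (1/p' + 1/q)"
        using A0 B0 p'1 q1 by (simp add: K1_def K2_def field_simps)
      also have "\<dots> = cs k * c * D" using pq by (simp add: A_def B_def)
      finally show ?thesis using int by (simp add: D_def)
    qed
  qed
qed

lemma dist_proj:
  "dist2 M (\<lambda>x. a * h x) (proj_line M h g) = (a - ip M g h / ip M h h)\<^sup>2 * ip M h h"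
proof -
  define t where "t = ip M g h / ip M h h"
  have pl: "proj_line M h g = (\<lambda>x. t * h x)" unfolding proj_line_def t_def ip_def by (simp add: power2_eq_square)
  have "dist2 M (\<lambda>x. a * h x) (proj_line M h g) = (LINT x|M. (a - t)\<^sup>2 * (h x)\<^sup>2)"
    unfolding dist2_def pl by (simp add: power2_eq_square algebra_simps)
  also have "\<dots> = (a - t)\<^sup>2 * ip M h h" by (simp add: ip_self)
  finally show ?thesis by (simp add: t_def)
qed

lemma translate:
  fixes N :: nat and L V C D T \<mu> :: real
  assumes N: "N > 0" and D: "D > 0"
  shows "(4 * L / real N * ((V / real N) / D + C) < ((T / real N) / D - \<mu> / D)\<^sup>2 * D) \<longleftrightarrow>
         (4 * L * (V + real N * (C * D)) < (T - real N * \<mu>)\<^sup>2)"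
proof -
  have N0: "real N > 0" using N by simp
  have e1: "4 * L / real N * ((V / real N) / D + C) = (4 * L * (V + real N * (C * D))) / (real N ^ 2 * D)"
    using N0 D by (simp add: field_simps power2_eq_square)
  have e2: "((T / real N) / D - \<mu> / D)\<^sup>2 * D = (T - real N * \<mu>)\<^sup>2 / (real N ^ 2 * D)"
    using N0 D by (simp add: field_simps power2_eq_square)
  have p: "real N ^ 2 * D > 0" using N0 D by simp
  show ?thesis unfolding e1 e2 using p N by (auto simp: divide_less_cancel)
qed

theorem corollary2:
  fixes M :: "'a measure" and f :: "'a \<Rightarrow> real" and fs :: "nat \<Rightarrow> 'a \<Rightarrow> real"
    and m N :: nat and c \<epsilon> :: real and cs :: "nat \<Rightarrow> real" and p :: ereal
  assumes "sigma_finite_measure M"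
    and "f \<in> borel_measurable M" and "\<forall>x\<in>space M. 0 \<le> f x"
    and "(\<integral>\<^sup>+ x. ennreal (f x) \<partial>M) = 1"
    and "f \<in> L2 M"
    and "0 < N"
    and "\<forall>k<m. fs k \<in> L2 M \<and> (LINT x|M. (fs k x)\<^sup>2) > 0"
    and "cond_H M f fs m c cs p"
    and "\<epsilon> > 0"
  shows "measure (PiM {..<N} (\<lambda>_. density M f))
           {\<omega> \<in> space (PiM {..<N} (\<lambda>_. density M f)).
              \<forall>k<m. \<forall>g\<in>L2 M. \<forall>q. is_metric_proj M (CR M fs m c cs N \<omega> \<epsilon> k) g q
                 \<longrightarrow> dist2 M q f \<le> dist2 M g f}
         \<ge> 1 - \<epsilon>"
proof -
  note fm = assms(2) and f0 = assms(3) and f1 = assms(4) and fL2 = assms(5) and N0 = assms(6)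
    and fsH = assms(7) and H = assms(8) and eps = assms(9)
  define \<Omega> where "\<Omega> = PiM {..<N} (\<lambda>_. density M f)"
  have Pp: "prob_space (density M f)" and fi: "integrable M f" and fI: "(LINT x|M. f x) = 1"
    using density_basics[OF fm f0 f1] by auto
  interpret OM: prob_space \<Omega> unfolding \<Omega>_def by (rule prob_space_PiM) (simp add: Pp)
  define E where "E = {\<omega> \<in> space \<Omega>.
              \<forall>k<m. \<forall>g\<in>L2 M. \<forall>q. is_metric_proj M (CR M fs m c cs N \<omega> \<epsilon> k) g q
                 \<longrightarrow> dist2 M q f \<le> dist2 M g f}"
  define a where "a \<omega> k = alpha_hat M fs N \<omega> k" for \<omega> k
  define b where "b \<omega> k = beta M fs m c cs N \<omega> \<epsilon> k" for \<omega> k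
  define \<gamma> where "\<gamma> k = ip M f (fs k) / ip M (fs k) (fs k)" for k
  define B where "B k = {\<omega> \<in> space \<Omega>. b \<omega> k < 0 \<or> (a \<omega> k - \<gamma> k)\<^sup>2 * ip M (fs k) (fs k) \<le> b \<omega> k}" for k
  define A where "A k = {\<omega> \<in> space \<Omega>. b \<omega> k < (a \<omega> k - \<gamma> k)\<^sup>2 * ip M (fs k) (fs k)}" for k
  have CReq: "CR M fs m c cs N \<omega> \<epsilon> k =
      {g \<in> L2 M. (a \<omega> k - ip M g (fs k) / ip M (fs k) (fs k))\<^sup>2 * ip M (fs k) (fs k) \<le> b \<omega> k}" for \<omega> k
    unfolding CR_def a_def b_def dist_proj ..
  have Eeq: "E = {\<omega> \<in> space \<Omega>. \<forall>k\<in>{..<m}. b \<omega> k < 0 \<or> (a \<omega> k - \<gamma> k)\<^sup>2 * ip M (fs k) (fs k) \<le> b \<omega> k}"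
  proof -
    have "(\<forall>g\<in>L2 M. \<forall>q. is_metric_proj M (CR M fs m c cs N \<omega> \<epsilon> k) g q \<longrightarrow> dist2 M q f \<le> dist2 M g f)
        \<longleftrightarrow> (b \<omega> k < 0 \<or> (a \<omega> k - \<gamma> k)\<^sup>2 * ip M (fs k) (fs k) \<le> b \<omega> k)" if k: "k < m" for \<omega> k
    proof -
      have fk: "fs k \<in> L2 M" and Dk: "ip M (fs k) (fs k) > 0" using fsH k by (auto simp: ip_self)
      show ?thesis unfolding CReq \<gamma>_def by (rule event_char[OF fL2 fk Dk])
    qed
    thus ?thesis unfolding E_def by auto
  qed
  have Bsets: "{\<omega> \<in> space \<Omega>. b \<omega> k < 0 \<or> (a \<omega> k - \<gamma> k)\<^sup>2 * ip M (fs k) (fs k) \<le> b \<omega> k} \<in> sets \<Omega>"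
    if k: "k \<in> {..<m}" for k
  proof -
    have [measurable]: "fs k \<in> borel_measurable M" using fsH k by (auto intro: L2_meas)
    have [measurable]: "(\<lambda>\<omega>. a \<omega> k) \<in> borel_measurable \<Omega>" unfolding a_def alpha_hat_def \<Omega>_def by measurable
    have bm[measurable]: "(\<lambda>\<omega>. b \<omega> k) \<in> borel_measurable \<Omega>" unfolding b_def beta_def \<Omega>_def by measurable
    have F: "(\<lambda>\<omega>. (a \<omega> k - \<gamma> k)\<^sup>2 * ip M (fs k) (fs k)) \<in> borel_measurable \<Omega>" by measurable
    have s1: "{\<omega>\<in>space \<Omega>. b \<omega> k < 0} \<in> sets \<Omega>" by measurable
    have s2: "{\<omega>\<in>space \<Omega>. (a \<omega> k - \<gamma> k)\<^sup>2 * ip M (fs k) (fs k) \<le> b \<omega> k} \<in> sets \<Omega>"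
      by (rule borel_measurable_le[OF F bm])
    have "{\<omega> \<in> space \<Omega>. b \<omega> k < 0 \<or> (a \<omega> k - \<gamma> k)\<^sup>2 * ip M (fs k) (fs k) \<le> b \<omega> k} =
       {\<omega>\<in>space \<Omega>. b \<omega> k < 0} \<union> {\<omega>\<in>space \<Omega>. (a \<omega> k - \<gamma> k)\<^sup>2 * ip M (fs k) (fs k) \<le> b \<omega> k}" by auto
    thus ?thesis using s1 s2 by simp
  qed
  have Esets: "E \<in> sets \<Omega>" unfolding Eeq by (rule sets.sets_Collect_finite_All[OF Bsets]) auto
  have Asets: "A k \<in> sets \<Omega>" if k: "k \<in> {..<m}" for k
  proof -
    have [measurable]: "fs k \<in> borel_measurable M" using fsH k by (auto intro: L2_meas)
    have [measurable]: "(\<lambda>\<omega>. a \<omega> k) \<in> borel_measurable \<Omega>" unfolding a_def alpha_hat_def \<Omega>_def by measurable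
    have bm[measurable]: "(\<lambda>\<omega>. b \<omega> k) \<in> borel_measurable \<Omega>" unfolding b_def beta_def \<Omega>_def by measurable
    have F: "(\<lambda>\<omega>. (a \<omega> k - \<gamma> k)\<^sup>2 * ip M (fs k) (fs k)) \<in> borel_measurable \<Omega>" by measurable
    show ?thesis unfolding A_def by (rule borel_measurable_less[OF bm F])
  qed
  show ?thesis
  proof (cases "\<epsilon> < 1")
    case False
    have "0 \<le> measure \<Omega> E" by simp
    hence "1 - \<epsilon> \<le> measure \<Omega> E" using False by linarith
    thus ?thesis unfolding E_def \<Omega>_def .
  next
    case True
    define L where "L = 1 + ln (2 * real m / \<epsilon>)"
    have Abound: "measure \<Omega> (A k) \<le> \<epsilon> / m" if k: "k \<in> {..<m}" for k
    proof -
      have km: "k < m" using k by simp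
      hence m0: "real m \<ge> 1" by simp
      have fk: "fs k \<in> L2 M" and Dk: "(LINT x|M. (fs k x)\<^sup>2) > 0" using fsH km by auto
      define Dk where "Dk = (LINT x|M. (fs k x)\<^sup>2)"
      have Dk0: "Dk > 0" using Dk by (simp add: Dk_def)
      have mom: "integrable M (\<lambda>x. f x * (fs k x)\<^sup>2) \<and> (LINT x|M. f x * (fs k x)\<^sup>2) \<le> cs k * c * Dk"
        unfolding Dk_def by (rule moment_bound[OF fm f0 fi fI fk Dk H km])
      have c0: "c > 0" and cs0: "cs k > 0" using H km by (auto simp: cond_H_def)
      define s where "s = cs k * c * Dk"
      have s0: "s > 0" using c0 cs0 Dk0 by (simp add: s_def)
      have "2 * real m / \<epsilon> \<ge> 1" using True eps m0 by (simp add: field_simps)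
      hence L0: "L \<ge> 0" unfolding L_def by simp
      define \<mu> where "\<mu> = (LINT x|M. f x * fs k x)"
      have Aeq: "A k = {\<omega> \<in> space \<Omega>. 4 * L * ((\<Sum>i<N. (fs k (\<omega> i))\<^sup>2) + real N * s) < ((\<Sum>i<N. fs k (\<omega> i)) - real N * \<mu>)\<^sup>2}"
      proof -
        have "b \<omega> k < (a \<omega> k - \<gamma> k)\<^sup>2 * ip M (fs k) (fs k) \<longleftrightarrow>
            4 * L * ((\<Sum>i<N. (fs k (\<omega> i))\<^sup>2) + real N * s) < ((\<Sum>i<N. fs k (\<omega> i)) - real N * \<mu>)\<^sup>2" for \<omega>
        proof -
          have "ip M (fs k) (fs k) = Dk" by (simp add: ip_self Dk_def)
          moreover have "ip M f (fs k) = \<mu>" by (simp add: ip_def \<mu>_def)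
          ultimately show ?thesis
            unfolding a_def b_def alpha_hat_def beta_def \<gamma>_def L_def[symmetric] Dk_def[symmetric] s_def
            using translate[OF N0 Dk0] by (simp add: mult.assoc)
        qed
        thus ?thesis unfolding A_def by auto
      qed
      have "measure \<Omega> (A k) \<le> 5 * exp (-L)"
        unfolding Aeq \<Omega>_def \<mu>_def
        by (rule concentration[OF fm f0 f1 L2_meas[OF fk] conjunct1[OF mom] _ s0 L0 N0])
           (use mom in \<open>simp add: s_def\<close>)
      also have "5 * exp (-L) = 5 * exp (-1) * (\<epsilon> / (2 * real m))"
        using eps m0 by (simp add: L_def exp_diff exp_minus field_simps)
      also have "\<dots> \<le> \<epsilon> / m"
      proof -
        have "1 + 1 + 1\<^sup>2/2 \<le> exp (1::real)" by (rule exp_lower_Taylor_quadratic) simp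
        hence "5 * exp (-1) \<le> (2::real)" by (simp add: exp_minus field_simps)
        hence "5 * exp (-1) * (\<epsilon> / (2 * real m)) \<le> 2 * (\<epsilon> / (2 * real m))"
          using eps m0 by (intro mult_right_mono) auto
        thus ?thesis by simp
      qed
      finally show ?thesis .
    qed
    have sub: "space \<Omega> - E \<subseteq> (\<Union>k\<in>{..<m}. A k)"
      unfolding Eeq A_def by auto
    have "measure \<Omega> (space \<Omega> - E) \<le> measure \<Omega> (\<Union>k\<in>{..<m}. A k)"
      using sub Asets by (intro OM.finite_measure_mono) auto
    also have "\<dots> \<le> (\<Sum>k\<in>{..<m}. measure \<Omega> (A k))"
      using Asets by (intro OM.finite_measure_subadditive_finite) auto
    also have "\<dots> \<le> (\<Sum>k\<in>{..<m}. \<epsilon> / m)" using Abound by (intro sum_mono) auto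
    also have "\<dots> \<le> \<epsilon>" using eps by (cases "m = 0") auto
    finally have "measure \<Omega> (space \<Omega> - E) \<le> \<epsilon>" .
    moreover have "measure \<Omega> (space \<Omega> - E) = 1 - measure \<Omega> E" using Esets by (rule OM.prob_compl)
    ultimately have "1 - \<epsilon> \<le> measure \<Omega> E" by simp
    thus ?thesis unfolding E_def \<Omega>_def .
  qed
qed

end
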